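(* Let $\mathcal A$ be a non-associative algebra. If there exists a qualitative representation $\phi$ of $\mathcal A$ such that for all $a,b,c,d\in A$ $$(a^\phi\circ b^\phi)\cap(c^\phi\circ d^\phi)=\varnothing\iff (a;b)\cdot(c;d)=0,$$ then $\mathcal A$ is associative, i.e. $(a;b);c=a;(b;c)$ for all $a,b,c\in A$.
   Context: A non-associative algebra is an algebra $(A,0,1,+,-,1',\breve{\ },;)$ such that $(A,0,1,+,-)$ is a boolean algebra (with $x\cdot y=-(-x+-y)$ and $x\le y\iff x+y=y$); $1';x=x=x;1'$, $\breve{\breve x}=x$, $(x;y)\breve{}=\breve y;\breve x$; $\breve 0=x;0=0$, $(x+y)\breve{}=\breve x+\breve y$, $x;(y+z)=x;y+x;z$; and the Peircean law holds: $x;y\cdot\breve z=0$ iff $y;z\cdot\breve x=0$. For binary relations, $r\circ s=\{(x,y):\exists z\,(x,z)\in r,(z,y)\in s\}$, $\breve r=\{(y,x):(x,y)\in r\}$, $\mathrm{Id}_D=\{(x,x):x\in D\}$. A qualitative representation of $\mathcal A$ over base $D$ is an injective map $\phi:A\to\wp(D\times D)$ such that $0^\phi=\varnothing$, $1^\phi=D\times D$, $(1')^\phi=\mathrm{Id}_D$, $(a+b)^\phi=a^\phi\cup b^\phi$, $(-a)^\phi=(D\times D)\setminus a^\phi$, $(\breve a)^\phi=(a^\phi)\breve{}$, and for all $a,b,c\in A$: $c^\phi\supseteq a^\phi\circ b^\phi\iff c\ge a;b$. *)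

theory Defs
  imports Main
begin

text \<open>A non-associative algebra (A,0,1,+,-,1',conv,;) whose universe is the whole type 'a.
  Meet is defined by x . y = -(-x + -y), and x \<le> y iff x + y = y.\<close>

definition ba_meet :: "('a \<Rightarrow> 'a \<Rightarrow> 'a) \<Rightarrow> ('a \<Rightarrow> 'a) \<Rightarrow> 'a \<Rightarrow> 'a \<Rightarrow> 'a" where
  "ba_meet pl cm x y = cm (pl (cm x) (cm y))"

definition boolean_alg :: "'a \<Rightarrow> 'a \<Rightarrow> ('a \<Rightarrow> 'a \<Rightarrow> 'a) \<Rightarrow> ('a \<Rightarrow> 'a) \<Rightarrow> bool" where
  "boolean_alg z u pl cm \<longleftrightarrow>
     (let mt = ba_meet pl cm in
     (\<forall>x y. pl x y = pl y x) \<and> (\<forall>x y. mt x y = mt y x) \<and>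
     (\<forall>x y w. pl x (pl y w) = pl (pl x y) w) \<and> (\<forall>x y w. mt x (mt y w) = mt (mt x y) w) \<and>
     (\<forall>x y. pl x (mt x y) = x) \<and> (\<forall>x y. mt x (pl x y) = x) \<and>
     (\<forall>x y w. mt x (pl y w) = pl (mt x y) (mt x w)) \<and>
     (\<forall>x y w. pl x (mt y w) = mt (pl x y) (pl x w)) \<and>
     (\<forall>x. pl x z = x) \<and> (\<forall>x. mt x u = x) \<and>
     (\<forall>x. pl x (cm x) = u) \<and> (\<forall>x. mt x (cm x) = z))"

definition nonassoc_algebra ::
  "'a \<Rightarrow> 'a \<Rightarrow> ('a \<Rightarrow> 'a \<Rightarrow> 'a) \<Rightarrow> ('a \<Rightarrow> 'a) \<Rightarrow> 'a \<Rightarrow> ('a \<Rightarrow> 'a) \<Rightarrow> ('a \<Rightarrow> 'a \<Rightarrow> 'a) \<Rightarrow> bool" where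
  "nonassoc_algebra z u pl cm e cv cp \<longleftrightarrow>
     boolean_alg z u pl cm \<and>
     (\<forall>x. cp e x = x \<and> cp x e = x) \<and>
     (\<forall>x. cv (cv x) = x) \<and>
     (\<forall>x y. cv (cp x y) = cp (cv y) (cv x)) \<and>
     cv z = z \<and> (\<forall>x. cp x z = z) \<and>
     (\<forall>x y. cv (pl x y) = pl (cv x) (cv y)) \<and>
     (\<forall>x y w. cp x (pl y w) = pl (cp x y) (cp x w)) \<and>
     (\<forall>x y w. ba_meet pl cm (cp x y) (cv w) = z \<longleftrightarrow> ba_meet pl cm (cp y w) (cv x) = z)"

definition qual_rep ::
  "'a \<Rightarrow> 'a \<Rightarrow> ('a \<Rightarrow> 'a \<Rightarrow> 'a) \<Rightarrow> ('a \<Rightarrow> 'a) \<Rightarrow> 'a \<Rightarrow> ('a \<Rightarrow> 'a) \<Rightarrow> ('a \<Rightarrow> 'a \<Rightarrow> 'a)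
    \<Rightarrow> 'b set \<Rightarrow> ('a \<Rightarrow> ('b \<times> 'b) set) \<Rightarrow> bool" where
  "qual_rep z u pl cm e cv cp D \<phi> \<longleftrightarrow>
     inj \<phi> \<and> \<phi> z = {} \<and> \<phi> u = D \<times> D \<and> \<phi> e = Id_on D \<and>
     (\<forall>a b. \<phi> (pl a b) = \<phi> a \<union> \<phi> b) \<and>
     (\<forall>a. \<phi> (cm a) = (D \<times> D) - \<phi> a) \<and>
     (\<forall>a. \<phi> (cv a) = converse (\<phi> a)) \<and>
     (\<forall>a b c. \<phi> a O \<phi> b \<subseteq> \<phi> c \<longleftrightarrow> pl c (cp a b) = c)"

end

theory Submission
  imports Defs
begin

theorem mainTheorem4:
  fixes z u :: 'a and pl cp :: "'a \<Rightarrow> 'a \<Rightarrow> 'a" and cm cv :: "'a \<Rightarrow> 'a" and e :: 'a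
  assumes "nonassoc_algebra z u pl cm e cv cp"
    and "\<exists>(D :: 'b set) \<phi>. qual_rep z u pl cm e cv cp D \<phi> \<and>
           (\<forall>a b c d. (\<phi> a O \<phi> b) \<inter> (\<phi> c O \<phi> d) = {} \<longleftrightarrow>
                       ba_meet pl cm (cp a b) (cp c d) = z)"
  shows "\<forall>a b c. cp (cp a b) c = cp a (cp b c)"
proof -
  obtain D :: "'b set" and \<phi> where Q: "qual_rep z u pl cm e cv cp D \<phi>" and
    C: "\<And>a b c d. (\<phi> a O \<phi> b) \<inter> (\<phi> c O \<phi> d) = {} \<longleftrightarrow> ba_meet pl cm (cp a b) (cp c d) = z"
    using assms(2) by blast
  have BA: "boolean_alg z u pl cm" using assms(1) unfolding nonassoc_algebra_def by blast
  have compl: "\<And>x. pl x (cm x) = u" and abs1: "\<And>x y. pl x (ba_meet pl cm x y) = x"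
    and abs2: "\<And>x y. ba_meet pl cm x (pl x y) = x"
    using BA unfolding boolean_alg_def Let_def by blast+
  have idem: "\<And>x. pl x x = x"
  proof -
    fix x have "pl x (ba_meet pl cm x (pl x x)) = x" by (rule abs1)
    thus "pl x x = x" using abs2[of x x] by simp
  qed
  have inj: "inj \<phi>" and pz: "\<phi> z = {}" and pu: "\<phi> u = D \<times> D"
    and ppl: "\<And>a b. \<phi> (pl a b) = \<phi> a \<union> \<phi> b"
    and pcm: "\<And>a. \<phi> (cm a) = (D \<times> D) - \<phi> a"
    and pcv: "\<And>a. \<phi> (cv a) = converse (\<phi> a)"
    and pcp: "\<And>a b c. \<phi> a O \<phi> b \<subseteq> \<phi> c \<longleftrightarrow> pl c (cp a b) = c"
    using Q unfolding qual_rep_def by (simp_all only: simp_thms)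
  have sub: "\<And>x. \<phi> x \<subseteq> D \<times> D" proof - fix x have "\<phi> (pl x (cm x)) = D \<times> D" using compl pu by simp thus "\<phi> x \<subseteq> D \<times> D" using ppl by blast qed
  have meet: "\<And>x y. \<phi> (ba_meet pl cm x y) = \<phi> x \<inter> \<phi> y"
    proof - fix x y show "\<phi> (ba_meet pl cm x y) = \<phi> x \<inter> \<phi> y" unfolding ba_meet_def using pcm ppl sub[of x] sub[of y] by auto qed
  have comp: "\<And>a b. \<phi> a O \<phi> b \<subseteq> \<phi> (cp a b)" using pcp idem by blast
  have disj: "\<And>a b c d. (\<phi> a O \<phi> b) \<inter> (\<phi> c O \<phi> d) = {} \<Longrightarrow> \<phi> (cp a b) \<inter> \<phi> (cp c d) = {}"
    proof - fix a b c d assume "(\<phi> a O \<phi> b) \<inter> (\<phi> c O \<phi> d) = {}" hence "ba_meet pl cm (cp a b) (cp c d) = z" using C by blast thus "\<phi> (cp a b) \<inter> \<phi> (cp c d) = {}" using meet pz by metis qed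
  have le: "\<And>x y. \<phi> x \<subseteq> \<phi> y \<Longrightarrow> \<phi> y \<subseteq> \<phi> x \<Longrightarrow> x = y" using inj
    by (simp add: inj_eq subset_antisym)
  show ?thesis
  proof (intro allI)
    fix a b c
    let ?L = "cp (cp a b) c" and ?R = "cp a (cp b c)"
    have 1: "\<phi> (cp a b) O \<phi> c \<subseteq> \<phi> ?R"
    proof
      fix p assume "p \<in> \<phi> (cp a b) O \<phi> c"
      then obtain x y t where p: "p = (x,t)" and xy: "(x,y) \<in> \<phi> (cp a b)" and yt: "(y,t) \<in> \<phi> c" by blast
      show "p \<in> \<phi> ?R"
      proof (rule ccontr)
        assume n: "p \<notin> \<phi> ?R"
        have "(x,t) \<in> \<phi> (cm ?R)" using n p pcm sub xy yt by blast
        hence "(x,y) \<in> \<phi> (cm ?R) O \<phi> (cv c)" using yt pcv by blast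
        hence "(x,y) \<in> \<phi> (cp (cm ?R) (cv c))" using comp by blast
        moreover have "(\<phi> a O \<phi> b) \<inter> (\<phi> (cm ?R) O \<phi> (cv c)) = {}"
        proof (rule ccontr)
          assume "(\<phi> a O \<phi> b) \<inter> (\<phi> (cm ?R) O \<phi> (cv c)) \<noteq> {}"
          then obtain x' m v' n' where "(x',m) \<in> \<phi> a" "(m,v') \<in> \<phi> b" "(x',n') \<in> \<phi> (cm ?R)"
            "(v',n') \<in> \<phi> c" using pcv by blast
          hence "(m,n') \<in> \<phi> (cp b c)" using comp by blast
          hence "(x',n') \<in> \<phi> ?R" using comp \<open>(x',m) \<in> \<phi> a\<close> by blast
          thus False using \<open>(x',n') \<in> \<phi> (cm ?R)\<close> pcm by blast
        qed
        ultimately show False using disj xy by blast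
      qed
    qed
    have 2: "\<phi> a O \<phi> (cp b c) \<subseteq> \<phi> ?L"
    proof
      fix p assume "p \<in> \<phi> a O \<phi> (cp b c)"
      then obtain x y t where p: "p = (x,t)" and xy: "(x,y) \<in> \<phi> a" and yt: "(y,t) \<in> \<phi> (cp b c)" by blast
      show "p \<in> \<phi> ?L"
      proof (rule ccontr)
        assume n: "p \<notin> \<phi> ?L"
        have "(x,t) \<in> \<phi> (cm ?L)" using n p pcm sub xy yt by blast
        hence "(y,t) \<in> \<phi> (cv a) O \<phi> (cm ?L)" using xy pcv by blast
        hence "(y,t) \<in> \<phi> (cp (cv a) (cm ?L))" using comp by blast
        moreover have "(\<phi> b O \<phi> c) \<inter> (\<phi> (cv a) O \<phi> (cm ?L)) = {}"
        proof (rule ccontr)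
          assume "(\<phi> b O \<phi> c) \<inter> (\<phi> (cv a) O \<phi> (cm ?L)) \<noteq> {}"
          then obtain x' m t' n' where "(x',m) \<in> \<phi> b" "(m,t') \<in> \<phi> c" "(n',x') \<in> \<phi> a"
            "(n',t') \<in> \<phi> (cm ?L)" using pcv by blast
          hence "(n',m) \<in> \<phi> (cp a b)" using comp by blast
          hence "(n',t') \<in> \<phi> ?L" using comp \<open>(m,t') \<in> \<phi> c\<close> by blast
          thus False using \<open>(n',t') \<in> \<phi> (cm ?L)\<close> pcm by blast
        qed
        ultimately show False using disj yt by blast
      qed
    qed
    have "\<phi> ?L \<subseteq> \<phi> ?R" proof - have "pl ?R ?L = ?R" using 1 pcp by blast hence "\<phi> ?R = \<phi> ?R \<union> \<phi> ?L" using ppl by metis thus ?thesis by blast qed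
    moreover have "\<phi> ?R \<subseteq> \<phi> ?L" proof - have "pl ?L ?R = ?L" using 2 pcp by blast hence "\<phi> ?L = \<phi> ?L \<union> \<phi> ?R" using ppl by metis thus ?thesis by blast qed
    ultimately show "?L = ?R" using le by blast
  qed
qed

end
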